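(* Assume $y_1(t)\to0$ as $t\to\infty$. Then the following are equivalent: (S) $\int_0^t\cos(\omega s)A(s)y_1(s)\,ds=o(A(t))$ and $\int_0^t\sin(\omega s)A(s)y_1(s)\,ds=o(A(t))$ as $t\to\infty$; (T) $\int_0^t\cos(\omega s)A(s)f(s)\,ds=o(A(t))$ and $\int_0^t\sin(\omega s)A(s)f(s)\,ds=o(A(t))$ as $t\to\infty$.
   Context: Standing assumptions: $\omega>0$ is a constant; $p\in C^1([0,\infty))$ with $p(t)>0$ and $p'(t)<0$ for all $t\ge0$, $\int_0^\infty p(t)\,dt=\infty$ and $\int_0^\infty p(t)^2\,dt<\infty$; $f\in L^1_{\mathrm{loc}}([0,\infty))$. Notation: $A(t)=\exp(\frac12\int_0^tp(s)\,ds)$ (so $A(t)\to\infty$); $y_1(t)=\int_0^te^{-\omega^2(t-s)}f(s)\,ds$, the solution of $y_1'=-\omega^2y_1+f$, $y_1(0)=0$. *)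

theory Defs
  imports "HOL-Analysis.Analysis" "HOL-Library.Landau_Symbols"
begin

definition Afun :: "(real \<Rightarrow> real) \<Rightarrow> real \<Rightarrow> real" where
  "Afun p t = exp (integral {0..t} p / 2)"

definition y1fun :: "real \<Rightarrow> (real \<Rightarrow> real) \<Rightarrow> real \<Rightarrow> real" where
  "y1fun \<omega> f t = integral {0..t} (\<lambda>s. exp (- (\<omega>\<^sup>2) * (t - s)) * f s)"

end

theory Submission
  imports Defs
begin

lemma sigma_finite_lebesgue: "sigma_finite_measure (lebesgue :: real measure)"
  unfolding sigma_finite_measure_def
proof (intro exI[of _ "range (\<lambda>n::nat. {-real n..real n})"] conjI)
  show "\<Union> (range (\<lambda>n::nat. {-real n..real n})) = space lebesgue"
    by (auto, metis abs_le_iff real_arch_simple minus_le_iff)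
qed (auto)

interpretation lebpair: pair_sigma_finite "lebesgue :: real measure" "lebesgue :: real measure"
  by (simp add: pair_sigma_finite.intro sigma_finite_lebesgue)

lemma cont_meas: "continuous_on UNIV (g::real\<Rightarrow>real) \<Longrightarrow> g \<in> borel_measurable lebesgue"
  by (simp add: borel_measurable_continuous_onI measurable_completion)

lemma fst_lebpair[measurable]: "(\<lambda>x::real\<times>real. fst x) \<in> borel_measurable (lebesgue \<Otimes>\<^sub>M lebesgue)"
  using measurable_compose[OF measurable_fst id_borel_measurable_lebesgue] by (simp add: id_def)
lemma snd_lebpair[measurable]: "(\<lambda>x::real\<times>real. snd x) \<in> borel_measurable (lebesgue \<Otimes>\<^sub>M lebesgue)"
  using measurable_compose[OF measurable_snd id_borel_measurable_lebesgue] by (simp add: id_def)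


lemma leb_to_hk:
  fixes \<phi> :: "real \<Rightarrow> real"
  assumes "integrable lebesgue (\<lambda>u. if u \<in> {a..b} then \<phi> u else 0)"
  shows "integral\<^sup>L lebesgue (\<lambda>u. if u \<in> {a..b} then \<phi> u else 0) = integral {a..b} \<phi>"
proof -
  have "((\<lambda>u. if u \<in> {a..b} then \<phi> u else 0) has_integral integral\<^sup>L lebesgue (\<lambda>u. if u \<in> {a..b} then \<phi> u else 0)) UNIV"
    by (rule has_integral_integral_lebesgue[OF assms])
  then have "(\<phi> has_integral integral\<^sup>L lebesgue (\<lambda>u. if u \<in> {a..b} then \<phi> u else 0)) {a..b}"
    using has_integral_restrict_UNIV by blast
  then show ?thesis by (simp add: integral_unique)
qed

lemma swap_lemma:
  fixes h g :: "real \<Rightarrow> real"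
  assumes h: "h absolutely_integrable_on {a..b}" and g: "continuous_on UNIV g"
  shows "integral {a..b} (\<lambda>u. g u * integral {a..u} h) = integral {a..b} (\<lambda>s. h s * integral {s..b} g)"
proof -
  define k where "k s = indicator {a..b} s * h s" for s
  have kint: "integrable lebesgue k"
    using h unfolding set_integrable_def k_def by simp
  have kmeas[measurable]: "k \<in> borel_measurable lebesgue"
    using kint by (rule borel_measurable_integrable)
  have gmeas[measurable]: "g \<in> borel_measurable lebesgue"
    using g by (rule cont_meas)
  obtain M where M: "\<And>u. u \<in> {a..b} \<Longrightarrow> \<bar>g u\<bar> \<le> M"
    using compact_continuous_image[OF continuous_on_subset[OF g] compact_Icc, of a b]
    by (metis bounded_iff compact_imp_bounded image_eqI real_norm_def subset_UNIV)
  define f where "f u s = (if a \<le> s \<and> s \<le> u \<and> u \<le> b then g u * k s else 0)" for u s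
  have fmeas[measurable]: "(\<lambda>(u,s). f u s) \<in> borel_measurable (lebesgue \<Otimes>\<^sub>M lebesgue)"
    unfolding f_def by measurable
  define D where "D u s = M * indicator {a..b} u * \<bar>k s\<bar>" for u s
  have Dmeas[measurable]: "(\<lambda>(u,s). D u s) \<in> borel_measurable (lebesgue \<Otimes>\<^sub>M lebesgue)"
    unfolding D_def by measurable
  have Dint: "integrable (lebesgue \<Otimes>\<^sub>M lebesgue) (\<lambda>(u,s). D u s)"
  proof (rule lebpair.Fubini_integrable)
    have "(\<lambda>u. \<integral>s. norm (D u s) \<partial>lebesgue) = (\<lambda>u. indicator {a..b} u * (\<bar>M\<bar> * (\<integral>s. \<bar>k s\<bar> \<partial>lebesgue)))"
      by (rule ext) (simp add: D_def abs_mult split: split_indicator)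
    moreover have "integrable lebesgue (\<lambda>u. indicator {a..b} u * (\<bar>M\<bar> * (\<integral>s. \<bar>k s\<bar> \<partial>lebesgue)))"
      by (intro integrable_mult_left integrable_real_indicator) (auto simp: emeasure_lborel_Icc_eq)
    ultimately show "integrable lebesgue (\<lambda>u. \<integral>s. norm (case (u, s) of (u, s) \<Rightarrow> D u s) \<partial>lebesgue)"
      by simp
    show "AE u in lebesgue. integrable lebesgue (\<lambda>s. case (u, s) of (u, s) \<Rightarrow> D u s)"
      using kint by (simp add: D_def)
  qed (use Dmeas in simp)
  have fint: "integrable (lebesgue \<Otimes>\<^sub>M lebesgue) (\<lambda>(u,s). f u s)"
  proof (rule Bochner_Integration.integrable_bound[OF Dint fmeas])
    show "AE x in lebesgue \<Otimes>\<^sub>M lebesgue. norm (case x of (u, s) \<Rightarrow> f u s) \<le> norm (case x of (u, s) \<Rightarrow> D u s)"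
    proof (intro AE_I2, clarify)
      fix u s
      show "norm (f u s) \<le> norm (D u s)"
        using M[of u] by (auto simp: f_def D_def abs_mult intro!: mult_right_mono)
    qed
  qed
  have eq1: "(\<lambda>u. \<integral>s. f u s \<partial>lebesgue) = (\<lambda>u. if u \<in> {a..b} then g u * integral {a..u} h else 0)"
  proof
    fix u
    show "(\<integral>s. f u s \<partial>lebesgue) = (if u \<in> {a..b} then g u * integral {a..u} h else 0)"
    proof (cases "u \<in> {a..b}")
      case True
      have hu: "h absolutely_integrable_on {a..u}"
        using h True by (intro absolutely_integrable_on_subinterval) auto
      have "(\<lambda>s. f u s) = (\<lambda>s. g u * (indicator {a..u} s *\<^sub>R h s))"
        using True by (auto simp: f_def k_def split: split_indicator)
      then have "(\<integral>s. f u s \<partial>lebesgue) = g u * (LINT s:{a..u}|lebesgue. h s)"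
        by (simp add: set_lebesgue_integral_def)
      also have "\<dots> = g u * integral {a..u} h"
        using set_lebesgue_integral_eq_integral(2)[OF hu] by simp
      finally show ?thesis using True by simp
    next
      case False
      then have "(\<lambda>s. f u s) = (\<lambda>s. 0)" by (auto simp: f_def)
      then show ?thesis using False by (simp del: atLeastAtMost_iff)
    qed
  qed
  have eq2: "(\<lambda>s. \<integral>u. f u s \<partial>lebesgue) = (\<lambda>s. if s \<in> {a..b} then h s * integral {s..b} g else 0)"
  proof
    fix s
    show "(\<integral>u. f u s \<partial>lebesgue) = (if s \<in> {a..b} then h s * integral {s..b} g else 0)"
    proof (cases "s \<in> {a..b}")
      case True
      have gu: "g absolutely_integrable_on {s..b}"
        using g by (intro absolutely_integrable_continuous_real continuous_on_subset[OF g]) auto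
      have "(\<lambda>u. f u s) = (\<lambda>u. h s * (indicator {s..b} u *\<^sub>R g u))"
        using True by (auto simp: f_def k_def split: split_indicator)
      then have "(\<integral>u. f u s \<partial>lebesgue) = h s * (LINT u:{s..b}|lebesgue. g u)"
        by (simp add: set_lebesgue_integral_def)
      also have "\<dots> = h s * integral {s..b} g"
        using set_lebesgue_integral_eq_integral(2)[OF gu] by simp
      finally show ?thesis using True by simp
    next
      case False
      then have "(\<lambda>u. f u s) = (\<lambda>u. 0)" by (auto simp: f_def k_def)
      then show ?thesis using False by (simp del: atLeastAtMost_iff)
    qed
  qed
  have i1: "integrable lebesgue (\<lambda>u. if u \<in> {a..b} then g u * integral {a..u} h else 0)"
    using lebpair.integrable_fst[OF fint] eq1 by simp
  have i2: "integrable lebesgue (\<lambda>s. if s \<in> {a..b} then h s * integral {s..b} g else 0)"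
    using lebpair.integrable_snd[OF fint] eq2 by simp
  have "(\<integral>s. (\<integral>u. f u s \<partial>lebesgue) \<partial>lebesgue) = (\<integral>u. (\<integral>s. f u s \<partial>lebesgue) \<partial>lebesgue)"
    by (rule lebpair.Fubini_integral[OF fint])
  then have "integral\<^sup>L lebesgue (\<lambda>s. if s \<in> {a..b} then h s * integral {s..b} g else 0)
      = integral\<^sup>L lebesgue (\<lambda>u. if u \<in> {a..b} then g u * integral {a..u} h else 0)"
    unfolding eq1 eq2 .
  then show ?thesis
    using leb_to_hk[OF i1] leb_to_hk[OF i2] by simp
qed


lemma cont_mult_absint:
  fixes F h :: "real \<Rightarrow> real"
  assumes F: "continuous_on {a..b} F" and h: "h absolutely_integrable_on {a..b}"
  shows "(\<lambda>x. F x * h x) absolutely_integrable_on {a..b}"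
proof (rule absolutely_integrable_bounded_measurable_product_real[OF _ _ _ h])
  show "F \<in> borel_measurable (lebesgue_on {a..b})"
    by (rule continuous_imp_measurable_on_sets_lebesgue[OF F]) auto
  show "bounded (F ` {a..b})"
    by (intro compact_imp_bounded compact_continuous_image F compact_Icc)
qed auto

lemma swap_lemma2:
  fixes h g :: "real \<Rightarrow> real"
  assumes h: "h absolutely_integrable_on {a..b}" and g: "continuous_on {a..b} g" and ab: "a \<le> b"
  shows "integral {a..b} (\<lambda>u. g u * integral {a..u} h) = integral {a..b} (\<lambda>s. h s * integral {s..b} g)"
proof -
  define g2 where "g2 u = g (max a (min b u))" for u
  have g2c: "continuous_on UNIV g2"
    unfolding g2_def
    by (rule continuous_on_compose2[OF g]) (auto intro!: continuous_intros simp: ab)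
  have eqg: "g2 u = g u" if "u \<in> {a..b}" for u
    using that by (auto simp: g2_def max_def min_def)
  have "integral {a..b} (\<lambda>u. g u * integral {a..u} h) = integral {a..b} (\<lambda>u. g2 u * integral {a..u} h)"
    by (rule integral_cong) (simp add: eqg)
  also have "\<dots> = integral {a..b} (\<lambda>s. h s * integral {s..b} g2)"
    by (rule swap_lemma[OF h g2c])
  also have "\<dots> = integral {a..b} (\<lambda>s. h s * integral {s..b} g)"
  proof (rule integral_cong)
    fix s assume s: "s \<in> {a..b}"
    have "integral {s..b} g2 = integral {s..b} g"
      by (rule integral_cong) (use s in \<open>auto intro!: eqg\<close>)
    then show "h s * integral {s..b} g2 = h s * integral {s..b} g" by simp
  qed
  finally show ?thesis .
qed

lemma ibp:
  fixes G G' h :: "real \<Rightarrow> real"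
  assumes ab: "a \<le> b" and h: "h absolutely_integrable_on {a..b}"
    and G'c: "continuous_on {a..b} G'"
    and dG: "\<And>x. x \<in> {a..b} \<Longrightarrow> (G has_real_derivative G' x) (at x within {a..b})"
  shows "integral {a..b} (\<lambda>s. G s * h s) = G b * integral {a..b} h - integral {a..b} (\<lambda>u. G' u * integral {a..u} h)"
proof -
  have Geq: "integral {s..b} G' = G b - G s" if "s \<in> {a..b}" for s
  proof -
    have "(G' has_integral (G b - G s)) {s..b}"
    proof (rule fundamental_theorem_of_calculus)
      show "s \<le> b" using that by simp
      fix x assume x: "x \<in> {s..b}"
      have "(G has_vector_derivative G' x) (at x within {a..b})"
        using dG[of x] x that by (simp add: has_real_derivative_iff_has_vector_derivative)
      then show "(G has_vector_derivative G' x) (at x within {s..b})"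
        by (rule has_vector_derivative_within_subset) (use that in auto)
    qed
    then show ?thesis by (simp add: integral_unique)
  qed
  have Gc: "continuous_on {a..b} G"
    using dG by (rule DERIV_continuous_on)
  have hint: "h integrable_on {a..b}"
    using h set_lebesgue_integral_eq_integral(1) by blast
  have i2: "(\<lambda>s. (G b - G s) * h s) integrable_on {a..b}"
  proof -
    have "continuous_on {a..b} (\<lambda>s. G b - G s)" by (intro continuous_intros Gc)
    from cont_mult_absint[OF this h] show ?thesis by (rule set_lebesgue_integral_eq_integral(1))
  qed
  have i2': "(\<lambda>s. h s * integral {s..b} G') integrable_on {a..b}"
    by (rule integrable_spike_finite[OF _ _ i2, of "{}"]) (auto simp: Geq)
  have "integral {a..b} (\<lambda>s. G s * h s) = integral {a..b} (\<lambda>s. G b * h s - h s * integral {s..b} G')"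
    by (rule integral_cong) (simp add: Geq algebra_simps)
  also have "\<dots> = G b * integral {a..b} h - integral {a..b} (\<lambda>s. h s * integral {s..b} G')"
  proof -
    have ci: "(\<lambda>s. G b * h s) integrable_on {a..b}"
      using integrable_on_cmult_left[OF hint, of "G b"] by simp
    show ?thesis using integral_diff[OF ci i2'] by simp
  qed
  also have "integral {a..b} (\<lambda>s. h s * integral {s..b} G') = integral {a..b} (\<lambda>u. G' u * integral {a..u} h)"
    by (rule swap_lemma2[OF h G'c ab, symmetric])
  finally show ?thesis .
qed

lemma Aderiv:
  assumes pc: "continuous_on {0..} p" and a: "0 \<le> a" and x: "x \<in> {a..b}"
  shows "(Afun p has_real_derivative (p x / 2 * Afun p x)) (at x within {a..b})"
proof -
  have "((\<lambda>u. integral {0..u} p) has_vector_derivative p x) (at x within {0..b})"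
    by (rule integral_has_vector_derivative) (use pc a x in \<open>auto intro: continuous_on_subset\<close>)
  then have "((\<lambda>u. integral {0..u} p) has_real_derivative p x) (at x within {a..b})"
    by (rule has_vector_derivative_within_subset[THEN has_real_derivative_iff_has_vector_derivative[THEN iffD2]])
       (use a in auto)
  then have "((\<lambda>u. exp (integral {0..u} p / 2)) has_real_derivative (exp (integral {0..x} p / 2) * (p x / 2))) (at x within {a..b})"
    by (auto intro!: derivative_eq_intros)
  then show ?thesis unfolding Afun_def by (simp add: mult.commute)
qed

lemma Acont:
  assumes pc: "continuous_on {0..} p"
  shows "continuous_on {0..t} (Afun p)"
  by (rule DERIV_continuous_on[OF Aderiv[OF pc order_refl]])

lemma Apos: "Afun p t > 0" by (simp add: Afun_def)

lemma Plem:
  fixes p z :: "real \<Rightarrow> real"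
  assumes pc: "continuous_on {0..} p" and ppos: "\<And>t. t \<ge> 0 \<Longrightarrow> p t \<ge> 0"
    and zc: "\<And>b. continuous_on {0..b} z" and zlim: "(z \<longlongrightarrow> 0) at_top"
    and Ainf: "filterlim (Afun p) at_top at_top"
  shows "(\<lambda>t. integral {0..t} (\<lambda>s. p s * Afun p s * z s)) \<in> o[at_top](Afun p)"
proof (rule landau_o.smallI)
  fix c :: real assume c: "c > 0"
  define e where "e = c / 3"
  have e: "e > 0" using c by (simp add: e_def)
  define P where "P t = integral {0..t} (\<lambda>s. p s * Afun p s * z s)" for t
  have intg: "(\<lambda>s. p s * Afun p s * z s) integrable_on {a..b}" if "0 \<le> a" for a b
  proof (rule integrable_continuous_interval)
    show "continuous_on {a..b} (\<lambda>s. p s * Afun p s * z s)"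
      using that by (intro continuous_intros continuous_on_subset[OF pc] continuous_on_subset[OF zc[of b]]
          continuous_on_subset[OF Acont[OF pc, of b]]) auto
  qed
  from zlim e have "eventually (\<lambda>s. \<bar>z s\<bar> < e) at_top"
    by (auto simp: tendsto_iff dist_real_def)
  then obtain N where N: "\<And>s. s \<ge> N \<Longrightarrow> \<bar>z s\<bar> < e"
    by (auto simp: eventually_at_top_linorder)
  define T where "T = max N 0"
  have T0: "T \<ge> 0" by (simp add: T_def)
  have zT: "\<And>s. s \<ge> T \<Longrightarrow> \<bar>z s\<bar> \<le> e" using N by (fastforce simp: T_def)
  have ev1: "eventually (\<lambda>t. Afun p t \<ge> \<bar>P T\<bar> / e) at_top"
    using Ainf by (simp add: filterlim_at_top)
  have ev2: "eventually (\<lambda>t. t \<ge> T) at_top" by (rule eventually_ge_at_top)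
  show "eventually (\<lambda>t. norm (integral {0..t} (\<lambda>s. p s * Afun p s * z s)) \<le> c * norm (Afun p t)) at_top"
    using ev1 ev2
  proof eventually_elim
    case (elim t)
    have split: "P t = P T + integral {T..t} (\<lambda>s. p s * Afun p s * z s)"
    proof -
      have "T \<le> t" using elim by simp
      from Henstock_Kurzweil_Integration.integral_combine[OF T0 this intg[OF order_refl]]
      show ?thesis by (simp add: P_def)
    qed
    have hasI: "((\<lambda>s. p s * Afun p s * e) has_integral (2 * e * Afun p t - 2 * e * Afun p T)) {T..t}"
    proof (rule fundamental_theorem_of_calculus)
      show "T \<le> t" using elim by simp
      fix x assume x: "x \<in> {T..t}"
      have "((\<lambda>s. 2 * e * Afun p s) has_real_derivative (2 * e * (p x / 2 * Afun p x))) (at x within {T..t})"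
        by (rule DERIV_cmult[OF Aderiv[OF pc T0 x]])
      then show "((\<lambda>s. 2 * e * Afun p s) has_vector_derivative p x * Afun p x * e) (at x within {T..t})"
        by (simp add: has_real_derivative_iff_has_vector_derivative[symmetric] algebra_simps)
    qed
    have bound: "norm (integral {T..t} (\<lambda>s. p s * Afun p s * z s)) \<le> integral {T..t} (\<lambda>s. p s * Afun p s * e)"
    proof (rule integral_norm_bound_integral)
      show "(\<lambda>s. p s * Afun p s * z s) integrable_on {T..t}" by (rule intg[OF T0])
      show "(\<lambda>s. p s * Afun p s * e) integrable_on {T..t}" using hasI by blast
      fix x assume x: "x \<in> {T..t}"
      have pA: "0 \<le> p x * Afun p x" using ppos[of x] x T0 Apos[of p x] by simp
      have "norm (p x * Afun p x * z x) = (p x * Afun p x) * \<bar>z x\<bar>"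
        using pA by (simp add: abs_mult[of "p x * Afun p x"])
      also have "\<dots> \<le> p x * Afun p x * e"
        using zT[of x] x pA by (intro mult_left_mono) auto
      finally show "norm (p x * Afun p x * z x) \<le> p x * Afun p x * e" .
    qed
    also have "\<dots> = 2 * e * Afun p t - 2 * e * Afun p T" using integral_unique[OF hasI] by (simp del: integral_mult_left)
    also have "\<dots> \<le> 2 * e * Afun p t" using e Apos[of p T] by simp
    finally have b2: "\<bar>integral {T..t} (\<lambda>s. p s * Afun p s * z s)\<bar> \<le> 2 * e * Afun p t" by simp
    have b1: "\<bar>P T\<bar> \<le> e * Afun p t" using elim e by (simp add: field_simps)
    have "\<bar>P t\<bar> \<le> c * Afun p t" using split b1 b2 by (simp add: e_def)
    then show ?case using Apos[of p t] by (simp add: P_def)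
  qed
qed


lemma lin_solve:
  fixes a b tc ts rc rs pc ps \<omega> w :: real
  assumes w: "w > 0"
    and E1: "tc = rc + \<omega> * b - pc / 2 + w * a" and E2: "ts = rs - \<omega> * a - ps / 2 + w * b"
  shows "a = (w * tc - \<omega> * ts - w * rc + \<omega> * rs + w * pc / 2 - \<omega> * ps / 2) / (w\<^sup>2 + \<omega>\<^sup>2)"
    and "b = (\<omega> * tc + w * ts - \<omega> * rc - w * rs + \<omega> * pc / 2 + w * ps / 2) / (w\<^sup>2 + \<omega>\<^sup>2)"
proof -
  have d: "w\<^sup>2 + \<omega>\<^sup>2 \<noteq> 0" using w by (simp add: add_pos_nonneg)
  have "a * (w\<^sup>2 + \<omega>\<^sup>2) = w * tc - \<omega> * ts - w * rc + \<omega> * rs + w * pc / 2 - \<omega> * ps / 2"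
    unfolding E1 E2 by (simp add: algebra_simps power2_eq_square)
  then show "a = (w * tc - \<omega> * ts - w * rc + \<omega> * rs + w * pc / 2 - \<omega> * ps / 2) / (w\<^sup>2 + \<omega>\<^sup>2)"
    using d by (simp add: nonzero_eq_divide_eq)
  have "b * (w\<^sup>2 + \<omega>\<^sup>2) = \<omega> * tc + w * ts - \<omega> * rc - w * rs + \<omega> * pc / 2 + w * ps / 2"
    unfolding E1 E2 by (simp add: algebra_simps power2_eq_square)
  then show "b = (\<omega> * tc + w * ts - \<omega> * rc - w * rs + \<omega> * pc / 2 + w * ps / 2) / (w\<^sup>2 + \<omega>\<^sup>2)"
    using d by (simp add: nonzero_eq_divide_eq)
qed

theorem mainTheorem13:
  fixes \<omega> :: real and p p' f :: "real \<Rightarrow> real"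
  assumes omega_pos: "\<omega> > 0"
    and p_deriv: "\<And>t. t \<ge> 0 \<Longrightarrow> (p has_real_derivative p' t) (at t within {0..})"
    and p'_cont: "continuous_on {0..} p'"
    and p_pos: "\<And>t. t \<ge> 0 \<Longrightarrow> p t > 0"
    and p'_neg: "\<And>t. t \<ge> 0 \<Longrightarrow> p' t < 0"
    and p_int_infinite: "filterlim (\<lambda>t. integral {0..t} p) at_top at_top"
    and p_sq_int: "(\<lambda>t. (p t)\<^sup>2) integrable_on {0..}"
    and f_loc: "\<And>t. t \<ge> 0 \<Longrightarrow> f absolutely_integrable_on {0..t}"
    and y1_lim: "((y1fun \<omega> f) \<longlongrightarrow> 0) at_top"
  shows "((\<lambda>t. integral {0..t} (\<lambda>s. cos (\<omega> * s) * Afun p s * y1fun \<omega> f s)) \<in> o[at_top](Afun p) \<and>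
          (\<lambda>t. integral {0..t} (\<lambda>s. sin (\<omega> * s) * Afun p s * y1fun \<omega> f s)) \<in> o[at_top](Afun p))
     \<longleftrightarrow>
         ((\<lambda>t. integral {0..t} (\<lambda>s. cos (\<omega> * s) * Afun p s * f s)) \<in> o[at_top](Afun p) \<and>
          (\<lambda>t. integral {0..t} (\<lambda>s. sin (\<omega> * s) * Afun p s * f s)) \<in> o[at_top](Afun p))"
  proof -
  define w where "w = \<omega>\<^sup>2"
  have w: "w > 0" using omega_pos by (simp add: w_def)
  have pc: "continuous_on {0..} p"
    by (rule DERIV_continuous_on[of "{0..}" p p']) (simp add: p_deriv)
  have ppos: "\<And>t. t \<ge> 0 \<Longrightarrow> p t \<ge> 0" using p_pos less_imp_le by blast
  have Ainf: "filterlim (Afun p) at_top at_top"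
  proof -
    have "filterlim (\<lambda>t. integral {0..t} p / 2) at_top at_top"
      unfolding filterlim_at_top
    proof
      fix Z :: real
      from p_int_infinite have "eventually (\<lambda>t. 2 * Z \<le> integral {0..t} p) at_top"
        by (simp add: filterlim_at_top)
      then show "eventually (\<lambda>t. Z \<le> integral {0..t} p / 2) at_top"
        by eventually_elim simp
    qed
    then show ?thesis unfolding Afun_def[abs_def] by (rule filterlim_compose[OF exp_at_top])
  qed
  define h where "h s = exp (w * s) * f s" for s
  define H where "H t = integral {0..t} h" for t
  define y where "y = y1fun \<omega> f"
  have yeq: "y t = exp (-w * t) * H t" for t
  proof -
    have ex: "exp (- (\<omega>\<^sup>2 * (t - s))) = exp (- (w * t)) * exp (w * s)" for s
      unfolding w_def exp_add[symmetric] by (simp add: algebra_simps)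
    have "y t = integral {0..t} (\<lambda>s. exp (-w * t) * h s)"
      unfolding y_def y1fun_def h_def
      by (rule integral_cong) (simp add: ex)
    also have "\<dots> = exp (-w * t) * H t" by (simp add: H_def)
    finally show ?thesis .
  qed
  have yfun: "y = (\<lambda>t. exp (-w * t) * H t)" using yeq by auto
  have habs: "h absolutely_integrable_on {0..t}" if "t \<ge> 0" for t
    unfolding h_def by (rule cont_mult_absint[OF _ f_loc[OF that]]) (intro continuous_intros)
  have Hc: "continuous_on {0..b} H" for b
  proof (cases "b \<ge> 0")
    case True
    have "h integrable_on {0..b}" using habs[OF True] set_lebesgue_integral_eq_integral(1) by blast
    then show ?thesis unfolding H_def[abs_def] by (rule indefinite_integral_continuous_1)
  qed simp
  have yc: "continuous_on {0..b} y" for b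
    unfolding yfun by (intro continuous_intros Hc)
  have Ac: "continuous_on {0..b} (Afun p)" for b by (rule Acont[OF pc])
  have pcb: "continuous_on {0..b} p" for b by (rule continuous_on_subset[OF pc]) auto
  have ee: "exp (- (w * s)) * exp (w * s) = 1" for s by (simp add: exp_add[symmetric])
  have HI: "integral {0..u} h = H u" for u by (simp add: H_def)

  define C where "C t = integral {0..t} (\<lambda>s. cos (\<omega> * s) * Afun p s * y s)" for t
  define S where "S t = integral {0..t} (\<lambda>s. sin (\<omega> * s) * Afun p s * y s)" for t
  define Pc where "Pc t = integral {0..t} (\<lambda>s. p s * Afun p s * (cos (\<omega> * s) * y s))" for t
  define Ps where "Ps t = integral {0..t} (\<lambda>s. p s * Afun p s * (sin (\<omega> * s) * y s))" for t
  define Tc where "Tc t = integral {0..t} (\<lambda>s. cos (\<omega> * s) * Afun p s * f s)" for t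
  define Ts where "Ts t = integral {0..t} (\<lambda>s. sin (\<omega> * s) * Afun p s * f s)" for t

  have iC: "((\<lambda>s. cos (\<omega> * s) * Afun p s * y s) has_integral C t) {0..t}" for t
    unfolding C_def by (intro integrable_integral integrable_continuous_interval continuous_intros Ac yc)
  have iS: "((\<lambda>s. sin (\<omega> * s) * Afun p s * y s) has_integral S t) {0..t}" for t
    unfolding S_def by (intro integrable_integral integrable_continuous_interval continuous_intros Ac yc)
  have iPc: "((\<lambda>s. p s * Afun p s * (cos (\<omega> * s) * y s)) has_integral Pc t) {0..t}" for t
    unfolding Pc_def by (intro integrable_integral integrable_continuous_interval continuous_intros Ac yc pcb)
  have iPs: "((\<lambda>s. p s * Afun p s * (sin (\<omega> * s) * y s)) has_integral Ps t) {0..t}" for t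
    unfolding Ps_def by (intro integrable_integral integrable_continuous_interval continuous_intros Ac yc pcb)

  have eqc: "Tc t = cos (\<omega> * t) * Afun p t * y t + \<omega> * S t - Pc t / 2 + w * C t" if t: "t \<ge> 0" for t
  proof -
    define G where "G s = cos (\<omega> * s) * Afun p s * exp (-w * s)" for s
    define G' where "G' s = (-\<omega> * sin (\<omega> * s) * Afun p s + cos (\<omega> * s) * (p s / 2 * Afun p s) - w * cos (\<omega> * s) * Afun p s) * exp (-w * s)" for s
    have dG: "(G has_real_derivative G' x) (at x within {0..t})" if x: "x \<in> {0..t}" for x
    proof -
      note dA = Aderiv[OF pc order_refl x]
      show ?thesis unfolding G_def G'_def
        by (auto intro!: derivative_eq_intros dA simp: algebra_simps)
    qed
    have G'c: "continuous_on {0..t} G'" unfolding G'_def by (intro continuous_intros pcb Ac) auto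
    have I: "integral {0..t} (\<lambda>s. G s * h s) = G t * integral {0..t} h - integral {0..t} (\<lambda>u. G' u * integral {0..u} h)"
      by (rule ibp[OF t habs[OF t] G'c dG])
    have e1: "integral {0..t} (\<lambda>s. G s * h s) = Tc t"
      unfolding Tc_def
    proof (rule integral_cong)
      fix s
      have "G s * h s = cos (\<omega> * s) * Afun p s * f s * (exp (-w * s) * exp (w * s))"
        by (simp add: G_def h_def algebra_simps)
      then show "G s * h s = cos (\<omega> * s) * Afun p s * f s" by (simp add: ee)
    qed
    have e2: "G t * integral {0..t} h = cos (\<omega> * t) * Afun p t * y t" by (simp add: G_def yeq HI)
    have "((\<lambda>u. G' u * integral {0..u} h) has_integral ((-\<omega>) * S t + Pc t / 2 - w * C t)) {0..t}"
    proof -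
      have "((\<lambda>u. (-\<omega>) * (sin (\<omega> * u) * Afun p u * y u) + p u * Afun p u * (cos (\<omega> * u) * y u) / 2 - w * (cos (\<omega> * u) * Afun p u * y u))
          has_integral ((-\<omega>) * S t + Pc t / 2 - w * C t)) {0..t}"
        by (intro has_integral_diff has_integral_add has_integral_mult_right has_integral_divide iS iPc iC)
      then show ?thesis
        by (rule has_integral_eq[rotated]) (simp add: G'_def HI yeq algebra_simps)
    qed
    then have e3: "integral {0..t} (\<lambda>u. G' u * integral {0..u} h) = (-\<omega>) * S t + Pc t / 2 - w * C t"
      by (rule integral_unique)
    show ?thesis using I e1 e2 e3 by simp
  qed
  have eqs: "Ts t = sin (\<omega> * t) * Afun p t * y t - \<omega> * C t - Ps t / 2 + w * S t" if t: "t \<ge> 0" for t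
  proof -
    define G where "G s = sin (\<omega> * s) * Afun p s * exp (-w * s)" for s
    define G' where "G' s = (\<omega> * cos (\<omega> * s) * Afun p s + sin (\<omega> * s) * (p s / 2 * Afun p s) - w * sin (\<omega> * s) * Afun p s) * exp (-w * s)" for s
    have dG: "(G has_real_derivative G' x) (at x within {0..t})" if x: "x \<in> {0..t}" for x
    proof -
      note dA = Aderiv[OF pc order_refl x]
      show ?thesis unfolding G_def G'_def
        by (auto intro!: derivative_eq_intros dA simp: algebra_simps)
    qed
    have G'c: "continuous_on {0..t} G'" unfolding G'_def by (intro continuous_intros pcb Ac) auto
    have I: "integral {0..t} (\<lambda>s. G s * h s) = G t * integral {0..t} h - integral {0..t} (\<lambda>u. G' u * integral {0..u} h)"
      by (rule ibp[OF t habs[OF t] G'c dG])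
    have e1: "integral {0..t} (\<lambda>s. G s * h s) = Ts t"
      unfolding Ts_def
    proof (rule integral_cong)
      fix s
      have "G s * h s = sin (\<omega> * s) * Afun p s * f s * (exp (-w * s) * exp (w * s))"
        by (simp add: G_def h_def algebra_simps)
      then show "G s * h s = sin (\<omega> * s) * Afun p s * f s" by (simp add: ee)
    qed
    have e2: "G t * integral {0..t} h = sin (\<omega> * t) * Afun p t * y t" by (simp add: G_def yeq HI)
    have "((\<lambda>u. G' u * integral {0..u} h) has_integral (\<omega> * C t + Ps t / 2 - w * S t)) {0..t}"
    proof -
      have "((\<lambda>u. \<omega> * (cos (\<omega> * u) * Afun p u * y u) + p u * Afun p u * (sin (\<omega> * u) * y u) / 2 - w * (sin (\<omega> * u) * Afun p u * y u))
          has_integral (\<omega> * C t + Ps t / 2 - w * S t)) {0..t}"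
        by (intro has_integral_diff has_integral_add has_integral_mult_right has_integral_divide iS iPs iC)
      then show ?thesis
        by (rule has_integral_eq[rotated]) (simp add: G'_def HI yeq algebra_simps)
    qed
    then have e3: "integral {0..t} (\<lambda>u. G' u * integral {0..u} h) = \<omega> * C t + Ps t / 2 - w * S t"
      by (rule integral_unique)
    show ?thesis using I e1 e2 e3 by simp
  qed
  have ylim: "(y \<longlongrightarrow> 0) at_top" using y1_lim by (simp add: y_def)
  have zlc: "((\<lambda>s. cos (\<omega> * s) * y s) \<longlongrightarrow> 0) at_top"
  proof (rule Lim_null_comparison[OF _ tendsto_rabs_zero[OF ylim]])
    show "\<forall>\<^sub>F x in at_top. norm (cos (\<omega> * x) * y x) \<le> \<bar>y x\<bar>"
      by (intro always_eventually allI) (simp add: abs_mult mult_left_le_one_le)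
  qed
  have zls: "((\<lambda>s. sin (\<omega> * s) * y s) \<longlongrightarrow> 0) at_top"
  proof (rule Lim_null_comparison[OF _ tendsto_rabs_zero[OF ylim]])
    show "\<forall>\<^sub>F x in at_top. norm (sin (\<omega> * x) * y x) \<le> \<bar>y x\<bar>"
      by (intro always_eventually allI) (simp add: abs_mult mult_left_le_one_le)
  qed
  have oPc: "Pc \<in> o[at_top](Afun p)"
    unfolding Pc_def[abs_def] by (rule Plem[OF pc ppos _ zlc Ainf]) (auto intro!: continuous_intros yc)
  have oPs: "Ps \<in> o[at_top](Afun p)"
    unfolding Ps_def[abs_def] by (rule Plem[OF pc ppos _ zls Ainf]) (auto intro!: continuous_intros yc)
  have Anz: "Afun p t \<noteq> 0" for t by (simp add: Afun_def)
  have tl: "g \<in> o[at_top](Afun p) \<longleftrightarrow> ((\<lambda>t. g t / Afun p t) \<longlongrightarrow> 0) at_top" for g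
    using smalloI_tendsto[of g "Afun p" at_top] smalloD_tendsto[of g at_top "Afun p"] Anz
    by (auto intro: always_eventually)
  have qPc: "((\<lambda>t. Pc t / Afun p t) \<longlongrightarrow> 0) at_top" using oPc tl by blast
  have qPs: "((\<lambda>t. Ps t / Afun p t) \<longlongrightarrow> 0) at_top" using oPs tl by blast
  have ec: "eventually (\<lambda>t. Tc t / Afun p t = cos (\<omega> * t) * y t + \<omega> * (S t / Afun p t) - (Pc t / Afun p t) / 2 + w * (C t / Afun p t)) at_top"
    using eventually_ge_at_top[of 0]
  proof eventually_elim
    case (elim t)
    have "Tc t / Afun p t = (cos (\<omega> * t) * Afun p t * y t + \<omega> * S t - Pc t / 2 + w * C t) / Afun p t"
      using eqc[OF elim] by simp
    also have "\<dots> = cos (\<omega> * t) * y t + \<omega> * (S t / Afun p t) - (Pc t / Afun p t) / 2 + w * (C t / Afun p t)"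
      using Anz[of t] by (simp add: add_divide_distrib diff_divide_distrib)
    finally show ?case .
  qed
  have es: "eventually (\<lambda>t. Ts t / Afun p t = sin (\<omega> * t) * y t - \<omega> * (C t / Afun p t) - (Ps t / Afun p t) / 2 + w * (S t / Afun p t)) at_top"
    using eventually_ge_at_top[of 0]
  proof eventually_elim
    case (elim t)
    have "Ts t / Afun p t = (sin (\<omega> * t) * Afun p t * y t - \<omega> * C t - Ps t / 2 + w * S t) / Afun p t"
      using eqs[OF elim] by simp
    also have "\<dots> = sin (\<omega> * t) * y t - \<omega> * (C t / Afun p t) - (Ps t / Afun p t) / 2 + w * (S t / Afun p t)"
      using Anz[of t] by (simp add: add_divide_distrib diff_divide_distrib)
    finally show ?case .
  qed
  have goal': "(C \<in> o[at_top](Afun p) \<and> S \<in> o[at_top](Afun p)) \<longleftrightarrow> (Tc \<in> o[at_top](Afun p) \<and> Ts \<in> o[at_top](Afun p))"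
    unfolding tl
  proof
    assume "((\<lambda>t. C t / Afun p t) \<longlongrightarrow> 0) at_top \<and> ((\<lambda>t. S t / Afun p t) \<longlongrightarrow> 0) at_top"
    then have qC: "((\<lambda>t. C t / Afun p t) \<longlongrightarrow> 0) at_top" and qS: "((\<lambda>t. S t / Afun p t) \<longlongrightarrow> 0) at_top" by auto
    have "((\<lambda>t. cos (\<omega> * t) * y t + \<omega> * (S t / Afun p t) - (Pc t / Afun p t) / 2 + w * (C t / Afun p t)) \<longlongrightarrow> 0 + \<omega> * 0 - 0 / 2 + w * 0) at_top"
      by (intro tendsto_intros zlc qS qPc qC) auto
    then have l1: "((\<lambda>t. Tc t / Afun p t) \<longlongrightarrow> 0) at_top"
      by (subst tendsto_cong[OF ec]) simp
    have "((\<lambda>t. sin (\<omega> * t) * y t - \<omega> * (C t / Afun p t) - (Ps t / Afun p t) / 2 + w * (S t / Afun p t)) \<longlongrightarrow> 0 - \<omega> * 0 - 0 / 2 + w * 0) at_top"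
      by (intro tendsto_intros zls qS qPs qC) auto
    then have l2: "((\<lambda>t. Ts t / Afun p t) \<longlongrightarrow> 0) at_top"
      by (subst tendsto_cong[OF es]) simp
    show "((\<lambda>t. Tc t / Afun p t) \<longlongrightarrow> 0) at_top \<and> ((\<lambda>t. Ts t / Afun p t) \<longlongrightarrow> 0) at_top"
      using l1 l2 by simp
  next
    assume "((\<lambda>t. Tc t / Afun p t) \<longlongrightarrow> 0) at_top \<and> ((\<lambda>t. Ts t / Afun p t) \<longlongrightarrow> 0) at_top"
    then have qTc: "((\<lambda>t. Tc t / Afun p t) \<longlongrightarrow> 0) at_top" and qTs: "((\<lambda>t. Ts t / Afun p t) \<longlongrightarrow> 0) at_top" by auto
    have eC: "eventually (\<lambda>t. C t / Afun p t = (w * (Tc t / Afun p t) - \<omega> * (Ts t / Afun p t) - w * (cos (\<omega> * t) * y t) + \<omega> * (sin (\<omega> * t) * y t) + w * (Pc t / Afun p t) / 2 - \<omega> * (Ps t / Afun p t) / 2) / (w\<^sup>2 + \<omega>\<^sup>2)) at_top"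
      using ec es by eventually_elim (rule lin_solve(1)[OF w])
    have eS: "eventually (\<lambda>t. S t / Afun p t = (\<omega> * (Tc t / Afun p t) + w * (Ts t / Afun p t) - \<omega> * (cos (\<omega> * t) * y t) - w * (sin (\<omega> * t) * y t) + \<omega> * (Pc t / Afun p t) / 2 + w * (Ps t / Afun p t) / 2) / (w\<^sup>2 + \<omega>\<^sup>2)) at_top"
      using ec es by eventually_elim (rule lin_solve(2)[OF w])
    have "((\<lambda>t. (w * (Tc t / Afun p t) - \<omega> * (Ts t / Afun p t) - w * (cos (\<omega> * t) * y t) + \<omega> * (sin (\<omega> * t) * y t) + w * (Pc t / Afun p t) / 2 - \<omega> * (Ps t / Afun p t) / 2) / (w\<^sup>2 + \<omega>\<^sup>2))
        \<longlongrightarrow> (w * 0 - \<omega> * 0 - w * 0 + \<omega> * 0 + w * 0 / 2 - \<omega> * 0 / 2) / (w\<^sup>2 + \<omega>\<^sup>2)) at_top"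
      by (intro tendsto_intros qTc qTs zlc zls qPc qPs) (use w in auto)
    then have l1: "((\<lambda>t. C t / Afun p t) \<longlongrightarrow> 0) at_top"
      by (subst tendsto_cong[OF eC]) simp
    have "((\<lambda>t. (\<omega> * (Tc t / Afun p t) + w * (Ts t / Afun p t) - \<omega> * (cos (\<omega> * t) * y t) - w * (sin (\<omega> * t) * y t) + \<omega> * (Pc t / Afun p t) / 2 + w * (Ps t / Afun p t) / 2) / (w\<^sup>2 + \<omega>\<^sup>2))
        \<longlongrightarrow> (\<omega> * 0 + w * 0 - \<omega> * 0 - w * 0 + \<omega> * 0 / 2 + w * 0 / 2) / (w\<^sup>2 + \<omega>\<^sup>2)) at_top"
      by (intro tendsto_intros qTc qTs zlc zls qPc qPs) (use w in auto)
    then have l2: "((\<lambda>t. S t / Afun p t) \<longlongrightarrow> 0) at_top"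
      by (subst tendsto_cong[OF eS]) simp
    show "((\<lambda>t. C t / Afun p t) \<longlongrightarrow> 0) at_top \<and> ((\<lambda>t. S t / Afun p t) \<longlongrightarrow> 0) at_top"
      using l1 l2 by simp
  qed
  show ?thesis
    using goal' unfolding C_def[abs_def] S_def[abs_def] Tc_def[abs_def] Ts_def[abs_def] y_def .
qed

end
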